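(* Let $\Lambda_1,\Lambda_2\in\mathbb R^{d\times d}$ be symmetric positive definite with $\Lambda_1\succ\Lambda_2$, and let $\mu\in\mathbb R^d$. Then $$d_{\mathsf C}\big(\mathcal N(\mu,\Lambda_1),\mathcal N(\mu,\Lambda_2)\big)=d_{\mathsf{TV}}\big(\mathcal N(\mu,\Lambda_1),\mathcal N(\mu,\Lambda_2)\big).$$
   Context: $d_{\mathsf C}(P,Q)=\sup_{\mathcal C}|P(\mathcal C)-Q(\mathcal C)|$ with the supremum over all convex subsets $\mathcal C\subseteq\mathbb R^d$; $d_{\mathsf{TV}}$ is the total variation distance; $\succ$ is the strict Loewner order. *)

theory Defs
  imports "HOL-Analysis.Analysis" "HOL-Probability.Probability"
begin

definition pos_def_matrix :: "real^'n^'n \<Rightarrow> bool" where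
  "pos_def_matrix A \<longleftrightarrow> transpose A = A \<and> (\<forall>x. x \<noteq> 0 \<longrightarrow> x \<bullet> (A *v x) > 0)"

definition loewner_gt :: "real^'n^'n \<Rightarrow> real^'n^'n \<Rightarrow> bool" where
  "loewner_gt A B \<longleftrightarrow> pos_def_matrix (A - B)"

definition gaussian_density :: "real^'n \<Rightarrow> real^'n^'n \<Rightarrow> real^'n \<Rightarrow> real" where
  "gaussian_density mu L x =
     exp (- ((x - mu) \<bullet> (matrix_inv L *v (x - mu))) / 2)
       / sqrt ((2 * pi) ^ CARD('n) * det L)"

text \<open>The Gaussian measure, defined on the Lebesgue (completed) sigma-algebra, so that
  all convex sets (which are Lebesgue measurable) get their proper probability.\<close>
definition gaussian :: "real^'n \<Rightarrow> real^'n^'n \<Rightarrow> (real^'n) measure" where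
  "gaussian mu L = density lebesgue (\<lambda>x. ennreal (gaussian_density mu L x))"

definition convex_dist :: "'a::real_vector measure \<Rightarrow> 'a measure \<Rightarrow> real" where
  "convex_dist P Q = (SUP C \<in> {C. convex C}. \<bar>measure P C - measure Q C\<bar>)"

definition tv_dist :: "'a measure \<Rightarrow> 'a measure \<Rightarrow> real" where
  "tv_dist P Q = (SUP A \<in> sets P. \<bar>measure P A - measure Q A\<bar>)"

end

theory Submission
  imports Defs
begin

lemma emeasure_lborel_box_cart:
  fixes l u :: "real^'n"
  assumes "\<And>i. l$i \<le> u$i"
  shows "emeasure lborel (box l u) = ennreal (\<Prod>i\<in>UNIV. u$i - l$i)"
proof -
  have ne: "cbox l u \<noteq> {}" using assms by (auto simp: cbox_def Basis_vec_def cart_eq_inner_axis)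
  have "emeasure lborel (box l u) = emeasure lborel (cbox l u)"
    using assms by (simp add: emeasure_lborel_box_eq emeasure_lborel_cbox_eq)
  also have "\<dots> = ennreal (measure lborel (cbox l u))"
    using ne by (simp add: emeasure_lborel_cbox_eq content_cbox_if inner_diff_left box_ne_empty(1)[symmetric])
  finally show ?thesis using content_cbox_cart[OF ne] by simp
qed

typedef 'a wo = "UNIV :: 'a set" by auto

instance wo :: (finite) finite
proof
  show "finite (UNIV :: 'a wo set)"
    by (metis finite_imageI finite_class.finite_UNIV type_definition.Abs_image[OF type_definition_wo])
qed

instantiation wo :: (finite) linorder
begin
definition less_eq_wo :: "'a wo \<Rightarrow> 'a wo \<Rightarrow> bool" where
  "less_eq_wo x y \<longleftrightarrow> to_nat (Rep_wo x) \<le> to_nat (Rep_wo y)"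
definition less_wo :: "'a wo \<Rightarrow> 'a wo \<Rightarrow> bool" where
  "less_wo x y \<longleftrightarrow> to_nat (Rep_wo x) < to_nat (Rep_wo y)"
instance
proof
  fix x y z :: "'a wo"
  show "(x < y) = (x \<le> y \<and> \<not> y \<le> x)" by (auto simp: less_eq_wo_def less_wo_def)
  show "x \<le> x" by (simp add: less_eq_wo_def)
  show "x \<le> y \<Longrightarrow> y \<le> z \<Longrightarrow> x \<le> z" by (simp add: less_eq_wo_def)
  show "x \<le> y \<Longrightarrow> y \<le> x \<Longrightarrow> x = y"
    by (simp add: less_eq_wo_def Rep_wo_inject)
  show "x \<le> y \<or> y \<le> x" by (auto simp: less_eq_wo_def)
qed
end

instance wo :: (finite) wellorder
proof
  fix P :: "'a wo \<Rightarrow> bool" and a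
  assume H: "\<And>x. (\<And>y. y < x \<Longrightarrow> P y) \<Longrightarrow> P x"
  have "\<And>n x. to_nat (Rep_wo x) = n \<Longrightarrow> P x"
  proof -
    fix n show "\<And>x. to_nat (Rep_wo x) = n \<Longrightarrow> P x"
    proof (induction n rule: less_induct)
      case (less n)
      show ?case by (rule H) (use less in \<open>auto simp: less_wo_def\<close>)
    qed
  qed
  then show "P a" by blast
qed

lemma linear_mv_measurable[measurable]: "(\<lambda>x. (A::real^'n^'m) *v x) \<in> borel_measurable borel"
  by (intro borel_measurable_continuous_onI linear_continuous_on) (simp add: linear_linear[symmetric] matrix_vector_mul_linear)

lemma lborel_orth_wo:
  fixes Q :: "real^'k::{finite,wellorder}^'k::{finite,wellorder}"
  assumes Q: "orthogonal_matrix Q"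
  shows "distr lborel borel ((*v) Q) = lborel"
proof (rule lborel_eqI[symmetric])
  show "sets (distr lborel borel ((*v) Q)) = sets borel" by simp
  fix l u :: "real^'k::{finite,wellorder}" assume lu: "\<And>b. b \<in> Basis \<Longrightarrow> l \<bullet> b \<le> u \<bullet> b"
  have QT: "transpose Q ** Q = mat 1" "Q ** transpose Q = mat 1"
    using Q by (auto simp: orthogonal_matrix_def)
  have pre: "(*v) Q -` box l u = (*v) (transpose Q) ` box l u"
  proof safe
    fix x assume "Q *v x \<in> box l u"
    moreover have "x = transpose Q *v (Q *v x)" by (metis QT matrix_vector_mul_assoc matrix_vector_mul_lid)
    ultimately show "x \<in> (*v) (transpose Q) ` box l u" by blast
  next
    fix x assume "x \<in> box l u"
    moreover have "Q *v (transpose Q *v x) = x" by (metis QT matrix_vector_mul_assoc matrix_vector_mul_lid)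
    ultimately show "transpose Q *v x \<in> (*v) Q -` box l u" by simp
  qed
  have ot: "orthogonal_transformation ((*v) (transpose Q))"
    using Q by (simp add: orthogonal_transformation_matrix orthogonal_matrix_def)
  have bl: "box l u \<in> lmeasurable" by simp
  have bor: "(*v) (transpose Q) ` box l u \<in> sets borel"
    by (metis pre linear_mv_measurable measurable_sets_borel open_box borel_open)
  have "emeasure (distr lborel borel ((*v) Q)) (box l u) = emeasure lborel ((*v) (transpose Q) ` box l u)"
    by (simp add: emeasure_distr pre)
  also have "\<dots> = emeasure lebesgue ((*v) (transpose Q) ` box l u)"
    using bor by simp
  also have "\<dots> = ennreal (measure lebesgue ((*v) (transpose Q) ` box l u))"
    using measurable_orthogonal_image[OF ot bl] by (simp add: emeasure_eq_measure2)
  also have "\<dots> = ennreal (measure lebesgue (box l u))"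
    using measure_orthogonal_image[OF ot bl] by simp
  also have "\<dots> = emeasure lborel (box l u)"
    by (simp add: emeasure_eq_measure2)
  also have "\<dots> = (\<Prod>b\<in>Basis. (u - l) \<bullet> b)" using lu by simp
  finally show "emeasure (distr lborel borel ((*v) Q)) (box l u) = (\<Prod>b\<in>Basis. (u - l) \<bullet> b)" .
qed

definition wo_R :: "real^('n::finite wo) \<Rightarrow> real^'n" where
  "wo_R v = (\<chi> i. v $ Abs_wo i)"

lemma wo_R_measurable[measurable]: "wo_R \<in> borel_measurable borel"
proof -
  have "wo_R = (\<lambda>v. ((\<chi> i j. if j = Abs_wo i then 1 else 0) :: real^('n wo)^'n) *v v)"
    by (auto simp: wo_R_def fun_eq_iff vec_eq_iff matrix_vector_mult_def if_distrib[of "\<lambda>z. z * _"] cong: if_cong)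
  then show ?thesis by (metis linear_mv_measurable)
qed

lemma lborel_wo_R: "distr lborel borel (wo_R :: real^('n::finite wo) \<Rightarrow> real^'n) = lborel"
proof (rule lborel_eqI[symmetric])
  show "sets (distr lborel borel (wo_R :: real^('n::finite wo) \<Rightarrow> real^'n)) = sets borel" by simp
  fix l u :: "real^'n" assume lu: "\<And>b. b \<in> Basis \<Longrightarrow> l \<bullet> b \<le> u \<bullet> b"
  have lu': "\<And>i. l$i \<le> u$i" using lu[of "axis _ 1"] by (simp add: inner_axis)
  define l' :: "real^('n wo)" where "l' = (\<chi> j. l $ Rep_wo j)"
  define u' :: "real^('n wo)" where "u' = (\<chi> j. u $ Rep_wo j)"
  have pre: "wo_R -` box l u = box l' u'"
    apply (auto simp: mem_box_cart wo_R_def l'_def u'_def Abs_wo_inverse)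
    by (metis Rep_wo_inverse Abs_wo_inverse UNIV_I)+
  have "emeasure (distr lborel borel wo_R) (box l u) = emeasure lborel (box l' u')"
    by (simp add: emeasure_distr pre)
  also have "\<dots> = ennreal (\<Prod>j\<in>UNIV. u' $ j - l' $ j)"
    by (rule emeasure_lborel_box_cart) (simp add: l'_def u'_def lu')
  also have "(\<Prod>j\<in>UNIV. u' $ j - l' $ j) = (\<Prod>i\<in>UNIV. u $ i - l $ i)"
    unfolding l'_def u'_def
    by (rule prod.reindex_bij_witness[where i=Abs_wo and j=Rep_wo]) (auto simp: Abs_wo_inverse Rep_wo_inverse)
  also have "ennreal \<dots> = emeasure lborel (box l u)"
    by (rule emeasure_lborel_box_cart[symmetric]) (simp add: lu')
  also have "\<dots> = (\<Prod>b\<in>Basis. (u - l) \<bullet> b)" using lu by simp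
  finally show "emeasure (distr lborel borel wo_R) (box l u) = (\<Prod>b\<in>Basis. (u - l) \<bullet> b)" .
qed

lemma lborel_orth:
  fixes Q :: "real^'n::finite^'n"
  assumes Q: "orthogonal_matrix Q"
  shows "distr lborel borel ((*v) Q) = lborel"
proof -
  define Q' :: "real^('n wo)^('n wo)" where "Q' = (\<chi> i j. Q $ Rep_wo i $ Rep_wo j)"
  have QT: "transpose Q ** Q = mat 1" using Q by (simp add: orthogonal_matrix_def)
  have "transpose Q' ** Q' = mat 1"
  proof -
    have "(transpose Q' ** Q') $ a $ b = (transpose Q ** Q) $ Rep_wo a $ Rep_wo b" for a b
      unfolding matrix_matrix_mult_def transpose_def Q'_def
      by simp (rule sum.reindex_bij_witness[where i=Abs_wo and j=Rep_wo]; simp add: Abs_wo_inverse Rep_wo_inverse)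
    then show ?thesis using QT by (simp add: vec_eq_iff mat_def Rep_wo_inject)
  qed
  then have Q': "orthogonal_matrix Q'" by (simp add: orthogonal_matrix)
  have comm: "(*v) Q \<circ> wo_R = wo_R \<circ> (*v) Q'"
  proof
    fix v :: "real^('n wo)"
    show "((*v) Q \<circ> wo_R) v = (wo_R \<circ> (*v) Q') v"
      unfolding o_def wo_R_def matrix_vector_mult_def Q'_def
      by (simp add: vec_eq_iff Abs_wo_inverse) (metis (no_types, lifting) sum.reindex_bij_witness[where i=Rep_wo and j=Abs_wo] Abs_wo_inverse Rep_wo_inverse UNIV_I)
  qed
  have "distr lborel borel ((*v) Q) = distr (distr lborel borel wo_R) borel ((*v) Q)"
    by (simp add: lborel_wo_R)
  also have "\<dots> = distr lborel borel ((*v) Q \<circ> wo_R)"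
    by (simp add: distr_distr)
  also have "\<dots> = distr lborel borel (wo_R \<circ> (*v) Q')" by (simp add: comm)
  also have "\<dots> = distr (distr lborel borel ((*v) Q')) borel wo_R"
    by (simp add: distr_distr)
  also have "\<dots> = lborel" by (simp add: lborel_orth_wo[OF Q'] lborel_wo_R)
  finally show ?thesis .
qed

lemma inner_mv_transpose: "x \<bullet> ((A::real^'n^'m) *v y) = (transpose A *v x) \<bullet> y"
proof -
  have "x \<bullet> (A *v y) = (\<Sum>i\<in>UNIV. \<Sum>j\<in>UNIV. x$i * (A$i$j * y$j))"
    by (simp add: inner_vec_def matrix_vector_mult_def sum_distrib_left inner_real_def)
  also have "\<dots> = (\<Sum>j\<in>UNIV. \<Sum>i\<in>UNIV. x$i * (A$i$j * y$j))"
    by (rule sum.swap)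
  also have "\<dots> = (transpose A *v x) \<bullet> y"
    by (simp add: inner_vec_def matrix_vector_mult_def transpose_def sum_distrib_right sum_distrib_left inner_real_def mult_ac)
  finally show ?thesis .
qed

lemma inner_mv_sym: "transpose A = A \<Longrightarrow> x \<bullet> ((A::real^'n^'n) *v y) = (A *v x) \<bullet> y"
  by (metis inner_mv_transpose)

lemma quad_arith:
  fixes n c :: real
  assumes "n \<ge> 0" and "\<And>t. 2*t*n + t^2*c \<le> 0"
  shows "n = 0"
proof (rule ccontr)
  assume "n \<noteq> 0" then have n: "n > 0" using assms by simp
  define t where "t = n / (\<bar>c\<bar> + 1)"
  have t: "t > 0" using n by (simp add: t_def)
  have "t * \<bar>c\<bar> < n" using n by (simp add: t_def field_simps)
  moreover have "t * c \<ge> - (t * \<bar>c\<bar>)" using t by (simp add: abs_if)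
  moreover have "t * (2*n + t*c) \<le> 0" using assms(2)[of t] by (simp add: power2_eq_square algebra_simps)
  then have "2*n + t*c \<le> 0" using t by (simp add: mult_le_0_iff)
  ultimately show False using n by linarith
qed

lemma eigen_subspace:
  fixes A :: "real^'n^'n"
  assumes sym: "transpose A = A"
  shows "subspace S \<Longrightarrow> (\<And>x. x \<in> S \<Longrightarrow> A *v x \<in> S) \<Longrightarrow>
    \<exists>B. B \<subseteq> S \<and> pairwise orthogonal B \<and> (\<forall>b\<in>B. norm b = 1 \<and> A *v b = (b \<bullet> (A *v b)) *\<^sub>R b) \<and> S \<subseteq> span B"
proof (induction "dim S" arbitrary: S rule: less_induct)
  case less
  show ?case
  proof (cases "S \<subseteq> {0}")
    case True
    then show ?thesis by (intro exI[of _ "{}"]) auto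
  next
    case False
    then obtain x where x: "x \<in> S" "x \<noteq> 0" by auto
    define f where "f = (\<lambda>y. y \<bullet> (A *v y))"
    have cf: "continuous_on UNIV f" unfolding f_def
      by (intro continuous_intros linear_continuous_on) (simp add: linear_linear[symmetric] matrix_vector_mul_linear)
    have K: "compact (S \<inter> sphere 0 1)"
      using less.prems(1) by (intro closed_Int_compact closed_subspace compact_sphere)
    have "x /\<^sub>R norm x \<in> S \<inter> sphere 0 1" using x less.prems(1)
      by (simp add: subspace_scale)
    then obtain v where v: "v \<in> S" "norm v = 1" and vmax: "\<And>y. y \<in> S \<Longrightarrow> norm y = 1 \<Longrightarrow> f y \<le> f v"
      using continuous_attains_sup[OF K _ continuous_on_subset[OF cf]] by force
    define l where "l = f v"
    define w where "w = A *v v - l *\<^sub>R v"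
    have wS: "w \<in> S" unfolding w_def using less v by (simp add: subspace_diff subspace_scale)
    have vv: "v \<bullet> v = 1" using v by (simp add: norm_eq_1)
    have wv: "w \<bullet> v = 0" unfolding w_def l_def f_def
      by (simp add: inner_diff_left vv inner_commute[of "A *v v" v])
    have Av: "A *v v = w + l *\<^sub>R v" by (simp add: w_def)
    have fscale: "f (c *\<^sub>R y) = c^2 * f y" for c y
      by (simp add: f_def matrix_vector_mult_scaleR power2_eq_square)
    have ineq: "f y \<le> l * (y \<bullet> y)" if "y \<in> S" for y
    proof (cases "y = 0")
      case True then show ?thesis by (simp add: f_def)
    next
      case False
      have "f (y /\<^sub>R norm y) \<le> l" using vmax[of "y /\<^sub>R norm y"] that less.prems(1) False
        by (simp add: subspace_scale l_def)
      then have "f y / (norm y)^2 \<le> l" using fscale[of "inverse (norm y)" y]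
        by (simp add: power_inverse divide_inverse mult.commute)
      then show ?thesis using False by (simp add: divide_le_eq power2_norm_eq_inner mult.commute)
    qed
    have "w \<bullet> w = 0"
    proof (rule quad_arith[where c = "w \<bullet> (A *v w) - l * (w \<bullet> w)"])
      show "0 \<le> w \<bullet> w" by simp
      fix t :: real
      have yS: "v + t *\<^sub>R w \<in> S" using less.prems(1) v wS by (simp add: subspace_add subspace_scale)
      have e1: "v \<bullet> (A *v w) = w \<bullet> w + l * (w \<bullet> v)"
        using inner_mv_sym[OF sym, of v w] by (simp add: Av inner_add_left inner_add_right inner_commute[of "A *v v"] inner_commute[of w v])
      have e2: "w \<bullet> (A *v v) = w \<bullet> w + l * (w \<bullet> v)"
        by (simp add: Av inner_add_right)
      have "f (v + t *\<^sub>R w) = l + 2*t*(w \<bullet> w) + t^2 * (w \<bullet> (A *v w))"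
        unfolding f_def using e1 e2 wv
        by (simp add: matrix_vector_right_distrib matrix_vector_mult_scaleR inner_add_left inner_add_right
            l_def f_def power2_eq_square algebra_simps)
      moreover have "(v + t *\<^sub>R w) \<bullet> (v + t *\<^sub>R w) = 1 + t^2 * (w \<bullet> w)"
        using vv wv by (simp add: inner_add_left inner_add_right inner_commute power2_eq_square)
      ultimately show "2*t*(w \<bullet> w) + t^2 * (w \<bullet> (A *v w) - l * (w \<bullet> w)) \<le> 0"
        using ineq[OF yS] by (simp add: algebra_simps)
    qed
    then have w0: "w = 0" by simp
    then have eig: "A *v v = l *\<^sub>R v" by (simp add: Av)
    define S' where "S' = S \<inter> {y. v \<bullet> y = 0}"
    have sub': "subspace S'" unfolding S'_def
      using less.prems(1) subspace_hyperplane[of v] by (rule subspace_inter)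
    have inv': "A *v y \<in> S'" if "y \<in> S'" for y
    proof -
      have "v \<bullet> (A *v y) = (A *v v) \<bullet> y" by (rule inner_mv_sym[OF sym])
      then show ?thesis using that less.prems(2) by (simp add: S'_def eig)
    qed
    have Sspan: "S = span (insert v S')"
    proof
      show "span (insert v S') \<subseteq> S"
        using v less.prems(1) by (intro span_minimal) (auto simp: S'_def)
      show "S \<subseteq> span (insert v S')"
      proof
        fix y assume y: "y \<in> S"
        have "y - (v \<bullet> y) *\<^sub>R v \<in> S'" using y v less.prems(1) vv
          by (simp add: S'_def subspace_diff subspace_scale inner_diff_right)
        then have "y - (v \<bullet> y) *\<^sub>R v + (v \<bullet> y) *\<^sub>R v \<in> span (insert v S')"
          by (intro span_add span_scale) (auto intro: span_base)
        then show "y \<in> span (insert v S')" by simp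
      qed
    qed
    have "v \<notin> span S'" using sub' vv by (simp add: span_eq_iff[THEN iffD2] S'_def)
    then have "dim S = dim S' + 1" using Sspan by (metis dim_insert dim_span)
    then have "dim S' < dim S" by simp
    from less.hyps[OF this sub' inv'] obtain B where
      B: "B \<subseteq> S'" "pairwise orthogonal B" "\<forall>b\<in>B. norm b = 1 \<and> A *v b = (b \<bullet> (A *v b)) *\<^sub>R b" "S' \<subseteq> span B"
      by blast
    show ?thesis
    proof (intro exI[of _ "insert v B"] conjI)
      show "insert v B \<subseteq> S" using B(1) v by (auto simp: S'_def)
      show "pairwise orthogonal (insert v B)"
        using B(1,2) by (auto simp: pairwise_insert S'_def orthogonal_def inner_commute)
      show "\<forall>b\<in>insert v B. norm b = 1 \<and> A *v b = (b \<bullet> (A *v b)) *\<^sub>R b"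
        using B(3) v eig by (simp add: l_def f_def)
      have "insert v S' \<subseteq> span (insert v B)"
        using B(4) span_mono[of B "insert v B"] by (auto intro: span_base)
      then have "span (insert v S') \<subseteq> span (insert v B)"
        by (rule span_minimal[OF _ subspace_span])
      then show "S \<subseteq> span (insert v B)" using Sspan by simp
    qed
  qed
qed

lemma pd_invertible:
  fixes L :: "real^'n^'n"
  assumes "pos_def_matrix L"
  shows "invertible L"
proof -
  have "\<forall>x. L *v x = 0 \<longrightarrow> x = 0"
    using assms unfolding pos_def_matrix_def by (metis inner_zero_right less_irrefl)
  then show ?thesis by (simp add: invertible_left_inverse matrix_left_invertible_ker)
qed

lemma matrix_inv_props:
  fixes L :: "real^'n^'n"
  assumes "invertible L"
  shows "L ** matrix_inv L = mat 1" "matrix_inv L ** L = mat 1"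
proof -
  have "\<exists>A'. L ** A' = mat 1 \<and> A' ** L = mat 1" using assms by (simp add: invertible_def)
  then have "L ** matrix_inv L = mat 1 \<and> matrix_inv L ** L = mat 1"
    unfolding matrix_inv_def by (rule someI_ex)
  then show "L ** matrix_inv L = mat 1" "matrix_inv L ** L = mat 1" by auto
qed

lemma pd_inv:
  fixes L :: "real^'n^'n"
  assumes L: "pos_def_matrix L"
  shows "pos_def_matrix (matrix_inv L)"
    and "L *v (matrix_inv L *v x) = x" "matrix_inv L *v (L *v x) = x"
proof -
  let ?M = "matrix_inv L"
  have inv: "L ** ?M = mat 1" "?M ** L = mat 1" using matrix_inv_props[OF pd_invertible[OF L]] by auto
  show LMx: "L *v (?M *v x) = x" for x by (simp add: matrix_vector_mul_assoc inv)
  show MLx: "?M *v (L *v x) = x" for x by (simp add: matrix_vector_mul_assoc inv)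
  have sL: "transpose L = L" using L by (simp add: pos_def_matrix_def)
  have "transpose ?M ** L = mat 1"
    by (metis inv(1) matrix_transpose_mul sL transpose_mat)
  then have "transpose ?M = ?M"
    by (metis inv(1) matrix_mul_assoc matrix_mul_lid matrix_mul_rid)
  moreover have "x \<bullet> (?M *v x) > 0" if "x \<noteq> 0" for x
  proof -
    have y: "?M *v x \<noteq> 0" using LMx[of x] that by (metis matrix_vector_mult_0_right)
    have "x \<bullet> (?M *v x) = (L *v (?M *v x)) \<bullet> (?M *v x)" by (simp add: LMx)
    also have "\<dots> = (?M *v x) \<bullet> (L *v (?M *v x))" by (simp add: inner_commute)
    also have "\<dots> > 0" using L y by (simp add: pos_def_matrix_def)
    finally show ?thesis .
  qed
  ultimately show "pos_def_matrix ?M" by (simp add: pos_def_matrix_def)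
qed

lemma loewner_inv:
  fixes L1 L2 :: "real^'n^'n"
  assumes L1: "pos_def_matrix L1" and L2: "pos_def_matrix L2" and gt: "loewner_gt L1 L2"
  shows "x \<bullet> ((matrix_inv L2 - matrix_inv L1) *v x) \<ge> 0"
proof -
  define M1 where "M1 = matrix_inv L1"
  define M2 where "M2 = matrix_inv L2"
  define y where "y = M1 *v x"
  have s2: "transpose L2 = L2" using L2 by (simp add: pos_def_matrix_def)
  have psd2: "z \<bullet> (L2 *v z) \<ge> 0" for z
    using L2 unfolding pos_def_matrix_def by (cases "z = 0") (auto intro: less_imp_le)
  have psd12: "z \<bullet> ((L1 - L2) *v z) \<ge> 0" for z
    using gt unfolding loewner_gt_def pos_def_matrix_def by (cases "z = 0") (auto intro: less_imp_le)
  have LM2: "L2 *v (M2 *v x) = x" using pd_inv(2)[OF L2] by (simp add: M2_def)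
  have LM1: "L1 *v y = x" using pd_inv(2)[OF L1] by (simp add: M1_def y_def)
  have "(y - M2 *v x) \<bullet> (L2 *v (y - M2 *v x)) \<ge> 0" by (rule psd2)
  moreover have "(y - M2 *v x) \<bullet> (L2 *v (y - M2 *v x)) =
      y \<bullet> (L2 *v y) - 2 * (y \<bullet> x) + x \<bullet> (M2 *v x)"
  proof -
    have a: "(M2 *v x) \<bullet> (L2 *v y) = y \<bullet> x"
      using inner_mv_sym[OF s2, of "M2 *v x" y] LM2 by (simp add: inner_commute)
    have b: "(M2 *v x) \<bullet> x = x \<bullet> (M2 *v x)" by (rule inner_commute)
    show ?thesis
      by (simp add: matrix_vector_mult_diff_distrib inner_diff_left inner_diff_right LM2 a b)
  qed
  moreover have "y \<bullet> ((L1 - L2) *v y) = y \<bullet> x - y \<bullet> (L2 *v y)"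
    by (simp add: matrix_vector_mult_diff_rdistrib inner_diff_right LM1)
  moreover have "y \<bullet> x = x \<bullet> (M1 *v x)" by (simp add: y_def inner_commute)
  ultimately have "x \<bullet> (M2 *v x) \<ge> x \<bullet> (M1 *v x)" using psd12[of y] by linarith
  then show ?thesis by (simp add: M1_def M2_def matrix_vector_mult_diff_rdistrib inner_diff_right)
qed

lemma convex_quad_sublevel:
  fixes N :: "real^'n^'n"
  assumes psd: "\<And>z. z \<bullet> (N *v z) \<ge> 0"
  shows "convex {x. (x - mu) \<bullet> (N *v (x - mu)) \<le> c}"
  unfolding convex_def
proof (clarsimp)
  fix x y :: "real^'n" and u v :: real
  assume x: "(x - mu) \<bullet> (N *v (x - mu)) \<le> c" and y: "(y - mu) \<bullet> (N *v (y - mu)) \<le> c"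
    and u: "0 \<le> u" and v: "0 \<le> v" and uv: "u + v = 1"
  define a where "a = x - mu"
  define b where "b = y - mu"
  have e: "u *\<^sub>R x + v *\<^sub>R y - mu = u *\<^sub>R a + v *\<^sub>R b"
    using uv by (simp add: a_def b_def algebra_simps) (metis add_diff_cancel_left' scaleR_add_left scaleR_one)
  have "(u *\<^sub>R a + v *\<^sub>R b) \<bullet> (N *v (u *\<^sub>R a + v *\<^sub>R b)) =
        u * (a \<bullet> (N *v a)) + v * (b \<bullet> (N *v b)) - u * v * ((a - b) \<bullet> (N *v (a - b)))"
  proof -
    have v': "v = 1 - u" using uv by simp
    show ?thesis unfolding v'
      by (simp add: matrix_vector_right_distrib matrix_vector_mult_diff_distrib matrix_vector_mult_scaleR
          inner_add_left inner_add_right inner_diff_left inner_diff_right algebra_simps power2_eq_square)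
  qed
  also have "\<dots> \<le> u * c + v * c"
  proof -
    have "u * v * ((a - b) \<bullet> (N *v (a - b))) \<ge> 0" using u v psd by simp
    moreover have "u * (a \<bullet> (N *v a)) \<le> u * c" using x u by (simp add: a_def mult_left_mono)
    moreover have "v * (b \<bullet> (N *v b)) \<le> v * c" using y v by (simp add: b_def mult_left_mono)
    ultimately show ?thesis by linarith
  qed
  also have "\<dots> = c" by (metis distrib_right mult_1 uv)
  finally show "(u *\<^sub>R x + v *\<^sub>R y - mu) \<bullet> (N *v (u *\<^sub>R x + v *\<^sub>R y - mu)) \<le> c"
    using e by simp
qed

lemma spectral_pd:
  fixes L :: "real^'n^'n"
  assumes L: "pos_def_matrix L"
  obtains \<beta> :: "'n \<Rightarrow> real^'n" and lam :: "'n \<Rightarrow> real" where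
    "\<And>j k. \<beta> j \<bullet> \<beta> k = (if j = k then 1 else 0)"
    "\<And>j. L *v \<beta> j = lam j *\<^sub>R \<beta> j" "\<And>j. lam j > 0"
    "det L = (\<Prod>j\<in>UNIV. lam j)"
proof -
  have sym: "transpose L = L" using L by (simp add: pos_def_matrix_def)
  obtain B where B: "pairwise orthogonal B" "\<forall>b\<in>B. norm b = 1 \<and> L *v b = (b \<bullet> (L *v b)) *\<^sub>R b"
     "UNIV \<subseteq> span B"
    using eigen_subspace[OF sym, of UNIV] by auto
  have ind: "independent B"
    using B(1,2) by (intro pairwise_orthogonal_independent) auto
  have fin: "finite B" using ind by (rule finiteI_independent)
  have "card B = dim (UNIV :: (real^'n) set)"
    using ind B(3) by (intro basis_card_eq_dim) auto
  then have cB: "card (UNIV :: 'n set) = card B" by simp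
  obtain h where h: "bij_betw h (UNIV :: 'n set) B"
    using finite_same_card_bij[OF finite_class.finite_UNIV fin cB] by blast
  define lam where "lam j = h j \<bullet> (L *v h j)" for j
  have hB: "h j \<in> B" for j using h by (auto simp: bij_betw_def)
  have orth: "h j \<bullet> h k = (if j = k then 1 else 0)" for j k
  proof (cases "j = k")
    case True then show ?thesis using B(2) hB[of j] by (simp add: norm_eq_1)
  next
    case False
    then have "h j \<noteq> h k" using h by (auto simp: bij_betw_def inj_on_def)
    then show ?thesis using B(1) hB[of j] hB[of k] False by (auto simp: pairwise_def orthogonal_def)
  qed
  have eig: "L *v h j = lam j *\<^sub>R h j" for j using B(2) hB[of j] by (simp add: lam_def)
  have pos: "lam j > 0" for j
  proof -
    have "h j \<noteq> 0" using orth[of j j] by auto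
    then show ?thesis using L by (simp add: lam_def pos_def_matrix_def)
  qed
  define Q :: "real^'n^'n" where "Q = (\<chi> i j. h j $ i)"
  define D :: "real^'n^'n" where "D = (\<chi> i j. if i = j then lam i else 0)"
  have "transpose Q ** Q = mat 1"
    using orth by (simp add: Q_def matrix_matrix_mult_def transpose_def vec_eq_iff mat_def inner_vec_def inner_real_def)
  then have oQ: "orthogonal_matrix Q" by (simp add: orthogonal_matrix)
  have "L ** Q = Q ** D"
  proof -
    have "(L ** Q) $ i $ j = (L *v h j) $ i" for i j
      by (simp add: Q_def matrix_matrix_mult_def matrix_vector_mult_def)
    moreover have "(Q ** D) $ i $ j = lam j * h j $ i" for i j
      by (simp add: Q_def D_def matrix_matrix_mult_def if_distrib[of "\<lambda>z. _ * z"] cong: if_cong)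
    ultimately show ?thesis by (simp add: vec_eq_iff eig)
  qed
  then have "det L * det Q = det Q * det D" by (metis det_mul)
  moreover have "det Q \<noteq> 0" using det_orthogonal_matrix[OF oQ] by auto
  moreover have "det D = (\<Prod>j\<in>UNIV. lam j)" by (subst det_diagonal) (auto simp: D_def)
  ultimately have "det L = (\<Prod>j\<in>UNIV. lam j)" by simp
  then show ?thesis using that orth eig pos by blast
qed

lemma lborel_diag:
  fixes d :: "'n::finite \<Rightarrow> real"
  assumes d: "\<And>j. d j > 0"
  shows "lborel = density (distr lborel borel (\<lambda>y::real^'n. \<chi> j. d j * y $ j)) (\<lambda>_. ennreal (\<Prod>j\<in>UNIV. d j))"
proof (rule lborel_eqI)
  have meas: "(\<lambda>y::real^'n. \<chi> j. d j * y $ j) \<in> borel_measurable borel"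
  proof -
    have eq: "(\<lambda>y::real^'n. \<chi> j. d j * y $ j) = (\<lambda>y. ((\<chi> i j. if i = j then d i else 0) :: real^'n^'n) *v y)"
      by (auto simp: fun_eq_iff vec_eq_iff matrix_vector_mult_def if_distrib[of "\<lambda>z. z * _"] cong: if_cong)
    show ?thesis unfolding eq by (rule linear_mv_measurable)
  qed
  show "sets (density (distr lborel borel (\<lambda>y::real^'n. \<chi> j. d j * y $ j)) (\<lambda>_. ennreal (\<Prod>j\<in>UNIV. d j))) = sets borel"
    by simp
  fix l u :: "real^'n" assume lu: "\<And>b. b \<in> Basis \<Longrightarrow> l \<bullet> b \<le> u \<bullet> b"
  have lu': "\<And>i. l$i \<le> u$i" using lu[of "axis _ 1"] by (simp add: inner_axis)
  define l' :: "real^'n" where "l' = (\<chi> j. l $ j / d j)"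
  define u' :: "real^'n" where "u' = (\<chi> j. u $ j / d j)"
  have pre: "(\<lambda>y::real^'n. \<chi> j. d j * y $ j) -` box l u = box l' u'"
    using d by (auto simp: mem_box_cart l'_def u'_def field_simps)
  have "emeasure (density (distr lborel borel (\<lambda>y::real^'n. \<chi> j. d j * y $ j)) (\<lambda>_. ennreal (\<Prod>j\<in>UNIV. d j))) (box l u)
      = ennreal (\<Prod>j\<in>UNIV. d j) * emeasure lborel (box l' u')"
    using meas by (simp add: emeasure_density_const emeasure_distr pre)
  also have "emeasure lborel (box l' u') = ennreal (\<Prod>j\<in>UNIV. u' $ j - l' $ j)"
    by (rule emeasure_lborel_box_cart) (use d lu' in \<open>simp add: l'_def u'_def divide_right_mono less_imp_le\<close>)
  also have "ennreal (\<Prod>j\<in>UNIV. d j) * ennreal (\<Prod>j\<in>UNIV. u' $ j - l' $ j) = ennreal (\<Prod>j\<in>UNIV. u $ j - l $ j)"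
  proof -
    have "(\<Prod>j\<in>UNIV. d j) * (\<Prod>j\<in>UNIV. u' $ j - l' $ j) = (\<Prod>j\<in>UNIV. d j * (u' $ j - l' $ j))"
      by (simp add: prod.distrib)
    also have "\<dots> = (\<Prod>j\<in>UNIV. u $ j - l $ j)"
    proof (rule prod.cong)
      fix j
      have "d j \<noteq> 0" using d[of j] by simp
      then show "d j * (u' $ j - l' $ j) = u $ j - l $ j"
        by (simp add: l'_def u'_def diff_divide_distrib[symmetric])
    qed simp
    finally show ?thesis using d by (simp add: ennreal_mult'[symmetric] prod_nonneg less_imp_le)
  qed
  also have "\<dots> = emeasure lborel (box l u)"
    by (rule emeasure_lborel_box_cart[symmetric]) (simp add: lu')
  also have "\<dots> = (\<Prod>b\<in>Basis. (u - l) \<bullet> b)" using lu by simp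
  finally show "emeasure (density (distr lborel borel (\<lambda>y::real^'n. \<chi> j. d j * y $ j)) (\<lambda>_. ennreal (\<Prod>j\<in>UNIV. d j))) (box l u) = (\<Prod>b\<in>Basis. (u - l) \<bullet> b)" .
qed

lemma gauss1d: "(\<integral>\<^sup>+t. ennreal (exp (- t\<^sup>2 / 2)) \<partial>lborel) = ennreal (sqrt (2 * pi))"
proof -
  have eq: "ennreal (exp (- t\<^sup>2 / 2)) = ennreal (sqrt (2 * pi)) * ennreal (std_normal_density t)" for t
    by (simp add: std_normal_density_def ennreal_mult'[symmetric])
  have "(\<integral>\<^sup>+t. ennreal (std_normal_density t) \<partial>lborel) = ennreal (integral\<^sup>L lborel std_normal_density)"
    by (rule nn_integral_eq_integral) auto
  then have 1: "(\<integral>\<^sup>+t. ennreal (std_normal_density t) \<partial>lborel) = 1" by simp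
  have "(\<integral>\<^sup>+t. ennreal (exp (- t\<^sup>2 / 2)) \<partial>lborel) = (\<integral>\<^sup>+t. ennreal (sqrt (2 * pi)) * ennreal (std_normal_density t) \<partial>lborel)"
    by (rule nn_integral_cong) (rule eq)
  also have "\<dots> = ennreal (sqrt (2 * pi)) * (\<integral>\<^sup>+t. ennreal (std_normal_density t) \<partial>lborel)"
    by (rule nn_integral_cmult) simp
  finally show ?thesis by (simp add: 1)
qed

lemma gaussK: "(\<integral>\<^sup>+y. ennreal (exp (- (y \<bullet> y) / 2)) \<partial>(lborel :: (real^'n::finite) measure)) = ennreal (sqrt (2 * pi) ^ CARD('n))"
proof -
  let ?B = "Basis :: (real^'n) set"
  let ?g = "\<lambda>b::real^'n. \<lambda>t::real. ennreal (exp (- t\<^sup>2 / 2))"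
  have "(\<integral>\<^sup>+y. ennreal (exp (- (y \<bullet> y) / 2)) \<partial>(lborel :: (real^'n::finite) measure))
      = (\<integral>\<^sup>+y. (\<Prod>b\<in>?B. ?g b (y \<bullet> b)) \<partial>lborel)"
  proof (rule nn_integral_cong)
    fix y :: "real^'n"
    have "y \<bullet> y = (\<Sum>b\<in>?B. (y \<bullet> b)\<^sup>2)" by (subst euclidean_inner) (simp add: power2_eq_square)
    then have "exp (- (y \<bullet> y) / 2) = exp (\<Sum>b\<in>?B. - (y \<bullet> b)\<^sup>2 / 2)"
      by (simp add: sum_divide_distrib sum_negf)
    also have "\<dots> = (\<Prod>b\<in>?B. exp (- (y \<bullet> b)\<^sup>2 / 2))" by (simp add: exp_sum)
    finally show "ennreal (exp (- (y \<bullet> y) / 2)) = (\<Prod>b\<in>?B. ?g b (y \<bullet> b))"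
      by (simp add: prod_ennreal)
  qed
  also have "\<dots> = (\<Prod>b\<in>?B. \<integral>\<^sup>+t. ?g b t \<partial>lborel)"
    by (rule nn_integral_lborel_prod) auto
  also have "\<dots> = ennreal (sqrt (2 * pi) ^ CARD('n))"
    using gauss1d by (simp add: ennreal_power)
  finally show ?thesis .
qed

lemma matrix_vector_mult_sum: "(A::real^'n^'m) *v (\<Sum>i\<in>I. f i) = (\<Sum>i\<in>I. A *v f i)"
  by (induction I rule: infinite_finite_induct) (simp_all add: matrix_vector_right_distrib)

lemma gaussian_density_measurable[measurable]: "gaussian_density mu L \<in> borel_measurable borel"
  unfolding gaussian_density_def by measurable

lemma gauss_mass:
  fixes L :: "real^'n^'n" and mu :: "real^'n"
  assumes L: "pos_def_matrix L"
  shows "(\<integral>\<^sup>+x. ennreal (gaussian_density mu L x) \<partial>lborel) = 1"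
proof -
  obtain \<beta> :: "'n \<Rightarrow> real^'n" and lam :: "'n \<Rightarrow> real" where
    orth: "\<And>j k. \<beta> j \<bullet> \<beta> k = (if j = k then 1 else 0)" and
    eig: "\<And>j. L *v \<beta> j = lam j *\<^sub>R \<beta> j" and pos: "\<And>j. lam j > 0" and
    det: "det L = (\<Prod>j\<in>UNIV. lam j)"
    using spectral_pd[OF L] by blast
  define M where "M = matrix_inv L"
  define d where "d j = sqrt (lam j)" for j
  have dpos: "d j > 0" for j using pos[of j] by (simp add: d_def)
  have d2: "d j * d j = lam j" for j using pos[of j] by (simp add: d_def)
  define Q :: "real^'n^'n" where "Q = (\<chi> i j. \<beta> j $ i)"
  have "transpose Q ** Q = mat 1"
    using orth by (simp add: Q_def matrix_matrix_mult_def transpose_def vec_eq_iff mat_def inner_vec_def inner_real_def)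
  then have oQ: "orthogonal_matrix Q" by (simp add: orthogonal_matrix)
  define S where "S = (\<lambda>y::real^'n. \<chi> j. d j * y $ j)"
  have Qv: "Q *v c = (\<Sum>j\<in>UNIV. c $ j *\<^sub>R \<beta> j)" for c
    by (simp add: vec_eq_iff Q_def matrix_vector_mult_def mult.commute)
  have Mb: "M *v \<beta> j = (1 / lam j) *\<^sub>R \<beta> j" for j
  proof -
    have "\<beta> j = M *v (L *v \<beta> j)" using pd_inv(3)[OF L] by (simp add: M_def)
    also have "\<dots> = lam j *\<^sub>R (M *v \<beta> j)" by (simp add: eig matrix_vector_mult_scaleR)
    finally have h: "\<beta> j = lam j *\<^sub>R (M *v \<beta> j)" .
    have "(1 / lam j) *\<^sub>R \<beta> j = (1 / lam j) *\<^sub>R (lam j *\<^sub>R (M *v \<beta> j))"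
      using h by (rule arg_cong)
    then show ?thesis using pos[of j] by simp
  qed
  have inner_sums: "(\<Sum>j\<in>UNIV. a j *\<^sub>R \<beta> j) \<bullet> (\<Sum>k\<in>UNIV. b k *\<^sub>R \<beta> k) = (\<Sum>j\<in>UNIV. a j * b j)" for a b
    by (simp add: inner_sum_left inner_sum_right orth if_distrib[of "\<lambda>z. _ * z"] mult.commute cong: if_cong)
  have quad: "(Q *v S y) \<bullet> (M *v (Q *v S y)) = y \<bullet> y" for y
  proof -
    have "M *v (Q *v S y) = (\<Sum>j\<in>UNIV. (d j * y $ j / lam j) *\<^sub>R \<beta> j)"
      by (simp add: Qv S_def matrix_vector_mult_sum matrix_vector_mult_scaleR Mb)
    then have "(Q *v S y) \<bullet> (M *v (Q *v S y)) = (\<Sum>j\<in>UNIV. (d j * y $ j) * (d j * y $ j / lam j))"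
      by (simp add: Qv S_def inner_sums)
    also have "\<dots> = (\<Sum>j\<in>UNIV. y $ j * y $ j)"
    proof (rule sum.cong[OF refl])
      fix j
      have "lam j \<noteq> 0" using pos[of j] by simp
      then show "(d j * y $ j) * (d j * y $ j / lam j) = y $ j * y $ j"
        using d2[of j] by (simp add: field_simps)
    qed
    also have "\<dots> = y \<bullet> y" by (simp add: inner_vec_def inner_real_def)
    finally show ?thesis .
  qed
  define s where "s = sqrt ((2 * pi) ^ CARD('n) * det L)"
  have detpos: "det L > 0" using pos by (simp add: det prod_pos)
  have spos: "s > 0" using detpos by (simp add: s_def)
  have gd: "gaussian_density mu L (mu + Q *v S y) = exp (- (y \<bullet> y) / 2) / s" for y
    using quad[of y] by (simp add: gaussian_density_def s_def M_def)
  define c where "c = (\<Prod>j\<in>UNIV. d j)"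
  have cpos: "c > 0" using dpos by (simp add: c_def prod_pos)
  have c2: "c = sqrt (det L)"
  proof -
    have "c ^ 2 = det L" by (simp add: c_def det power2_eq_square prod.distrib[symmetric] d2)
    then show ?thesis using cpos by (metis abs_of_pos real_sqrt_abs)
  qed
  have Sm: "S \<in> borel_measurable borel"
  proof -
    have eq: "S = (\<lambda>y. ((\<chi> i j. if i = j then d i else 0) :: real^'n^'n) *v y)"
      by (auto simp: S_def fun_eq_iff vec_eq_iff matrix_vector_mult_def if_distrib[of "\<lambda>z. z * _"] cong: if_cong)
    show ?thesis unfolding eq by (rule linear_mv_measurable)
  qed
  let ?g = "\<lambda>x. ennreal (gaussian_density mu L x)"
  have "(\<integral>\<^sup>+x. ?g x \<partial>lborel) = (\<integral>\<^sup>+x. ?g x \<partial>distr lborel borel ((+) mu))"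
    by (simp add: lborel_distr_plus)
  also have "\<dots> = (\<integral>\<^sup>+z. ?g (mu + z) \<partial>lborel)"
    by (rule nn_integral_distr) auto
  also have "\<dots> = (\<integral>\<^sup>+z. ?g (mu + z) \<partial>distr lborel borel ((*v) Q))"
    by (simp add: lborel_orth[OF oQ])
  also have "\<dots> = (\<integral>\<^sup>+w. ?g (mu + Q *v w) \<partial>lborel)"
    by (rule nn_integral_distr) auto
  also have "\<dots> = (\<integral>\<^sup>+w. ?g (mu + Q *v w) \<partial>density (distr lborel borel S) (\<lambda>_. ennreal c))"
  proof -
    have e: "lborel = density (distr lborel borel S) (\<lambda>_. ennreal c)"
      unfolding S_def c_def by (rule lborel_diag) (rule dpos)
    show ?thesis by (rule arg_cong[where f="\<lambda>M. nn_integral M (\<lambda>w. ?g (mu + Q *v w))", OF e])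
  qed
  also have "\<dots> = (\<integral>\<^sup>+w. ennreal c * ?g (mu + Q *v w) \<partial>distr lborel borel S)"
    by (rule nn_integral_density) (auto simp: Sm)
  also have "\<dots> = (\<integral>\<^sup>+y. ennreal c * ?g (mu + Q *v S y) \<partial>lborel)"
    by (rule nn_integral_distr) (auto simp: Sm)
  also have "\<dots> = (\<integral>\<^sup>+y. ennreal (c / s) * ennreal (exp (- ((y::real^'n) \<bullet> y) / 2)) \<partial>lborel)"
    by (intro nn_integral_cong) (simp add: gd ennreal_mult'[symmetric] spos cpos less_imp_le)
  also have "\<dots> = ennreal (c / s) * (\<integral>\<^sup>+y. ennreal (exp (- ((y::real^'n) \<bullet> y) / 2)) \<partial>lborel)"
    by (rule nn_integral_cmult) auto
  also have "\<dots> = ennreal (c / s) * ennreal (sqrt (2 * pi) ^ CARD('n))"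
    using gaussK[where 'n='n] by simp
  also have "\<dots> = ennreal (c / s * sqrt (2 * pi) ^ CARD('n))"
    using cpos spos by (simp add: ennreal_mult'[symmetric] less_imp_le)
  also have "c / s * sqrt (2 * pi) ^ CARD('n) = 1"
    using detpos by (simp add: c2 s_def real_sqrt_mult real_sqrt_power power_mult_distrib)
  finally show ?thesis by simp
qed

lemma pd_det_pos: "pos_def_matrix (L::real^'n^'n) \<Longrightarrow> det L > 0"
  by (metis spectral_pd prod_pos)

lemma gd_nonneg: "pos_def_matrix L \<Longrightarrow> 0 \<le> gaussian_density mu L x"
  unfolding gaussian_density_def using pd_det_pos[of L] by (simp add: less_imp_le)

lemma gd_meas_leb: "gaussian_density mu L \<in> borel_measurable lebesgue"
  by (rule measurable_completion) simp

lemma gd_int: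
  assumes L: "pos_def_matrix L"
  shows "integrable lebesgue (gaussian_density mu L)" "integral\<^sup>L lebesgue (gaussian_density mu L) = 1"
proof -
  have nn: "(\<integral>\<^sup>+x. ennreal (gaussian_density mu L x) \<partial>lebesgue) = ennreal 1"
    by (simp add: nn_integral_completion gauss_mass[OF L])
  show int: "integrable lebesgue (gaussian_density mu L)"
    by (rule integrableI_nn_integral_finite[OF gd_meas_leb _ nn]) (simp add: gd_nonneg[OF L])
  have "(\<integral>\<^sup>+x. ennreal (gaussian_density mu L x) \<partial>lebesgue) = ennreal (integral\<^sup>L lebesgue (gaussian_density mu L))"
    by (rule nn_integral_eq_integral[OF int]) (simp add: gd_nonneg[OF L])
  moreover have "0 \<le> integral\<^sup>L lebesgue (gaussian_density mu L)"
    by (rule Bochner_Integration.integral_nonneg) (simp add: gd_nonneg[OF L])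
  ultimately show "integral\<^sup>L lebesgue (gaussian_density mu L) = 1"
    using nn by (metis ennreal_inj zero_le_one)
qed

lemma meas_gauss:
  assumes L: "pos_def_matrix L" and A: "A \<in> sets lebesgue"
  shows "measure (gaussian mu L) A = (\<integral>x. gaussian_density mu L x * indicator A x \<partial>lebesgue)"
proof -
  have int: "integrable lebesgue (\<lambda>x. gaussian_density mu L x * indicator A x)"
    by (rule integrable_real_mult_indicator[OF A gd_int(1)[OF L]])
  have "emeasure (gaussian mu L) A = (\<integral>\<^sup>+x. ennreal (gaussian_density mu L x) * indicator A x \<partial>lebesgue)"
  proof -
    note [measurable] = gd_meas_leb A
    show ?thesis unfolding gaussian_def by (rule emeasure_density) measurable
  qed
  also have "\<dots> = (\<integral>\<^sup>+x. ennreal (gaussian_density mu L x * indicator A x) \<partial>lebesgue)"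
    by (intro nn_integral_cong) (simp add: indicator_def)
  also have "\<dots> = ennreal (\<integral>x. gaussian_density mu L x * indicator A x \<partial>lebesgue)"
    by (rule nn_integral_eq_integral[OF int]) (simp add: gd_nonneg[OF L])
  finally show ?thesis
    by (simp add: measure_def Bochner_Integration.integral_nonneg gd_nonneg[OF L])
qed

lemma abs_int_le:
  fixes f :: "'a \<Rightarrow> real"
  assumes f: "integrable M f" and f0: "integral\<^sup>L M f = 0" and E: "E \<in> sets M" and A: "A \<in> sets M"
    and sgn: "\<And>x. x \<in> space M \<Longrightarrow> x \<in> E \<longleftrightarrow> f x \<le> 0"
  shows "\<bar>\<integral>x. f x * indicator A x \<partial>M\<bar> \<le> - (\<integral>x. f x * indicator E x \<partial>M)"
proof -
  have iA: "integrable M (\<lambda>x. f x * indicator A x)" by (rule integrable_real_mult_indicator[OF A f])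
  have iE: "integrable M (\<lambda>x. f x * indicator E x)" by (rule integrable_real_mult_indicator[OF E f])
  have iE': "integrable M (\<lambda>x. f x - f x * indicator E x)" using f iE by simp
  have "(\<integral>x. f x * indicator A x \<partial>M) \<le> (\<integral>x. f x - f x * indicator E x \<partial>M)"
  proof (rule integral_mono[OF iA iE'])
    fix x assume x: "x \<in> space M"
    show "f x * indicator A x \<le> f x - f x * indicator E x"
      using sgn[OF x] by (cases "x \<in> E"; cases "x \<in> A") auto
  qed
  also have "\<dots> = - (\<integral>x. f x * indicator E x \<partial>M)"
    using f iE f0 by simp
  finally have 1: "(\<integral>x. f x * indicator A x \<partial>M) \<le> - (\<integral>x. f x * indicator E x \<partial>M)" .
  have "(\<integral>x. f x * indicator E x \<partial>M) \<le> (\<integral>x. f x * indicator A x \<partial>M)"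
  proof (rule integral_mono[OF iE iA])
    fix x assume x: "x \<in> space M"
    show "f x * indicator E x \<le> f x * indicator A x"
      using sgn[OF x] by (cases "x \<in> E"; cases "x \<in> A") auto
  qed
  with 1 show ?thesis by linarith
qed

lemma convex_lebesgue:
  fixes C :: "(real^'n) set"
  assumes "convex C"
  shows "C \<in> sets lebesgue"
proof -
  have "negligible (C - interior C)"
    using negligible_convex_frontier[OF assms]
    by (rule negligible_subset) (use closure_subset in \<open>auto simp: frontier_def\<close>)
  then have n: "C - interior C \<in> sets lebesgue"
    by (simp add: negligible_iff_null_sets null_setsD2)
  have i: "interior C \<in> sets lebesgue" by simp
  have "C = interior C \<union> (C - interior C)" using interior_subset by blast
  then show ?thesis using n i by (metis sets.Un)
qed

theorem mainTheorem18:
  fixes L1 L2 :: "real^'n^'n" and mu :: "real^'n"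
  assumes "pos_def_matrix L1" and "pos_def_matrix L2" and "loewner_gt L1 L2"
  shows "convex_dist (gaussian mu L1) (gaussian mu L2) = tv_dist (gaussian mu L1) (gaussian mu L2)"
proof -
  note L1 = assms(1) and L2 = assms(2) and gt = assms(3)
  let ?P = "gaussian mu L1" and ?Q = "gaussian mu L2"
  define g1 where "g1 = gaussian_density mu L1"
  define g2 where "g2 = gaussian_density mu L2"
  define f where "f x = g1 x - g2 x" for x
  define E where "E = {x. g1 x \<le> g2 x}"
  define M1 where "M1 = matrix_inv L1"
  define M2 where "M2 = matrix_inv L2"
  define s1 where "s1 = sqrt ((2 * pi) ^ CARD('n) * det L1)"
  define s2 where "s2 = sqrt ((2 * pi) ^ CARD('n) * det L2)"
  have s1: "s1 > 0" using pd_det_pos[OF L1] by (simp add: s1_def)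
  have s2: "s2 > 0" using pd_det_pos[OF L2] by (simp add: s2_def)
  have g1e: "g1 x = exp (- ((x - mu) \<bullet> (M1 *v (x - mu))) / 2) / s1" for x
    by (simp only: g1_def gaussian_density_def M1_def s1_def)
  have g2e: "g2 x = exp (- ((x - mu) \<bullet> (M2 *v (x - mu))) / 2) / s2" for x
    by (simp only: g2_def gaussian_density_def M2_def s2_def)
  have lg1: "ln (g1 x) = - ((x - mu) \<bullet> (M1 *v (x - mu))) / 2 - ln s1" for x
    using s1 by (simp add: g1e ln_div)
  have lg2: "ln (g2 x) = - ((x - mu) \<bullet> (M2 *v (x - mu))) / 2 - ln s2" for x
    using s2 by (simp add: g2e ln_div)
  have g1p: "g1 x > 0" for x using s1 by (simp add: g1e)
  have g2p: "g2 x > 0" for x using s2 by (simp add: g2e)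
  have Eeq: "E = {x. (x - mu) \<bullet> ((M2 - M1) *v (x - mu)) \<le> 2 * (ln s1 - ln s2)}"
  proof -
    have "g1 x \<le> g2 x \<longleftrightarrow> (x - mu) \<bullet> ((M2 - M1) *v (x - mu)) \<le> 2 * (ln s1 - ln s2)" for x
    proof -
      have "g1 x \<le> g2 x \<longleftrightarrow> ln (g1 x) \<le> ln (g2 x)" using g1p g2p by simp
      also have "\<dots> \<longleftrightarrow> (x - mu) \<bullet> ((M2 - M1) *v (x - mu)) \<le> 2 * (ln s1 - ln s2)"
        by (simp add: lg1 lg2 matrix_vector_mult_diff_rdistrib inner_diff_right) linarith
      finally show ?thesis .
    qed
    then show ?thesis by (simp add: E_def)
  qed
  have convE: "convex E"
    unfolding Eeq by (rule convex_quad_sublevel) (use loewner_inv[OF L1 L2 gt] in \<open>simp add: M1_def M2_def\<close>)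
  have Eset: "E \<in> sets lebesgue" by (rule convex_lebesgue[OF convE])
  have i1: "integrable lebesgue g1" and i2: "integrable lebesgue g2"
    using gd_int[OF L1] gd_int[OF L2] by (simp_all add: g1_def g2_def)
  have fint: "integrable lebesgue f" using i1 i2 by (simp add: f_def[abs_def])
  have f0: "integral\<^sup>L lebesgue f = 0"
    using i1 i2 gd_int(2)[OF L1] gd_int(2)[OF L2] by (simp add: f_def[abs_def] g1_def g2_def)
  have diff: "measure ?P A - measure ?Q A = (\<integral>x. f x * indicator A x \<partial>lebesgue)" if A: "A \<in> sets lebesgue" for A
  proof -
    have "measure ?P A - measure ?Q A = (\<integral>x. g1 x * indicator A x \<partial>lebesgue) - (\<integral>x. g2 x * indicator A x \<partial>lebesgue)"
      using meas_gauss[OF L1 A] meas_gauss[OF L2 A] by (simp add: g1_def g2_def)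
    also have "\<dots> = (\<integral>x. g1 x * indicator A x - g2 x * indicator A x \<partial>lebesgue)"
      by (rule Bochner_Integration.integral_diff[symmetric])
        (auto intro: integrable_real_mult_indicator[OF A] i1 i2)
    also have "\<dots> = (\<integral>x. f x * indicator A x \<partial>lebesgue)"
      by (simp add: f_def left_diff_distrib)
    finally show ?thesis .
  qed
  define T0 where "T0 = - (\<integral>x. f x * indicator E x \<partial>lebesgue)"
  have bound: "\<bar>measure ?P A - measure ?Q A\<bar> \<le> T0" if A: "A \<in> sets lebesgue" for A
    unfolding diff[OF A] T0_def
    by (rule abs_int_le[OF fint f0 Eset A]) (simp add: E_def f_def)
  have T0E: "T0 \<le> \<bar>measure ?P E - measure ?Q E\<bar>"
    unfolding diff[OF Eset] T0_def by simp
  have setsP: "sets ?P = sets lebesgue" by (simp add: gaussian_def)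
  have bddT: "bdd_above ((\<lambda>A. \<bar>measure ?P A - measure ?Q A\<bar>) ` sets ?P)"
    using bound by (auto simp: setsP bdd_above_def)
  have cs: "{C. convex C} \<subseteq> sets ?P" using convex_lebesgue by (auto simp: setsP)
  have bddC: "bdd_above ((\<lambda>A. \<bar>measure ?P A - measure ?Q A\<bar>) ` {C. convex C})"
    using bddT cs by (meson bdd_above_mono image_mono)
  have "convex_dist ?P ?Q \<le> tv_dist ?P ?Q"
    unfolding convex_dist_def tv_dist_def
    by (rule cSUP_subset_mono[OF _ bddT cs]) (auto intro: exI[of _ "{}"])
  moreover have "tv_dist ?P ?Q \<le> T0"
    unfolding tv_dist_def
    by (rule cSUP_least) (auto simp: setsP intro: bound)
  moreover have "T0 \<le> convex_dist ?P ?Q"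
    unfolding convex_dist_def
    by (rule cSUP_upper2[OF bddC _ T0E]) (simp add: convE)
  ultimately show ?thesis by linarith
qed

end
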